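(* Let $a,a_1,a_2,b,b_1,b_2,x,x_1,x_2$ be non-negative reals such that $x_1+x_2\le x$, $a_1+a_2\le a$, $b_1+b_2\le b$ and $x\le\min\{a,b\}$. Then $$a_1b_2+a_1x_2+b_1a_2+b_1x_2+x_1a_2+x_1b_2\le ab+x\max\{a,b\}.$$ *)

theory Defs
  imports Complex_Main
begin

end

theory Submission
  imports Defs
begin

lemma g: fixes u v w A B X :: real
  assumes "u\<ge>0" "v\<ge>0" "w\<ge>0" "A\<ge>0" "B\<ge>0" "X\<ge>0" "w+X \<le> v+B" "v+B \<le> u+A"
  shows "v*X + w*B \<le> u*v + A*B + u*w + A*X"
proof (cases "v+w-B-X \<ge> 0")
  case True
  have "u*(v+w-B-X) \<ge> 0" using True assms by simp
  moreover have "v*X \<le> (u+A)*X" using assms by (intro mult_right_mono) auto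
  moreover have "w*B \<le> (u+A)*B" using assms by (intro mult_right_mono) auto
  ultimately show ?thesis by (simp add: algebra_simps)
next
  case False
  have "A*(v+w-B-X) \<le> 0" using False assms by (simp add: mult_nonneg_nonpos)
  moreover have "v*X \<le> v*(u+A)" using assms by (intro mult_left_mono) auto
  moreover have "w*B \<le> w*(u+A)" using assms by (intro mult_left_mono) auto
  ultimately show ?thesis by (simp add: algebra_simps)
qed

lemma fcase: fixes a a1 a2 b b1 b2 x x1 x2 :: real
  assumes "a \<ge> 0" "a1 \<ge> 0" "a2 \<ge> 0" "b \<ge> 0" "b1 \<ge> 0" "b2 \<ge> 0"
    "x \<ge> 0" "x1 \<ge> 0" "x2 \<ge> 0"
    and "x1 + x2 \<le> x" and "a1 + a2 \<le> a" and "b1 + b2 \<le> b"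
    and "x \<le> b" "b \<le> a"
  shows "a1 * b2 + a1 * x2 + b1 * a2 + b1 * x2 + x1 * a2 + x1 * b2 \<le> a * b + x * a"
proof -
  have 1: "a1 * b2 + a1 * x2 + b1 * a2 + b1 * x2 + x1 * a2 + x1 * b2
     \<le> a1 * (b-b1) + a1 * (x-x1) + b1 * (a-a1) + b1 * (x-x1) + x1 * (a-a1) + x1 * (b-b1)"
    using assms by (intro add_mono mult_left_mono) auto
  have 2: "b1*(x-x1) + x1*(b-b1) \<le> a1*b1 + (a-a1)*(b-b1) + a1*x1 + (a-a1)*(x-x1)"
    using g[of a1 b1 x1 "a-a1" "b-b1" "x-x1"] assms by simp
  show ?thesis using 1 2 by (simp add: algebra_simps)
qed
theorem lemma6p3:
  fixes a a1 a2 b b1 b2 x x1 x2 :: real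
  assumes "a \<ge> 0" "a1 \<ge> 0" "a2 \<ge> 0" "b \<ge> 0" "b1 \<ge> 0" "b2 \<ge> 0"
    "x \<ge> 0" "x1 \<ge> 0" "x2 \<ge> 0"
    and "x1 + x2 \<le> x" and "a1 + a2 \<le> a" and "b1 + b2 \<le> b"
    and "x \<le> min a b"
  shows "a1 * b2 + a1 * x2 + b1 * a2 + b1 * x2 + x1 * a2 + x1 * b2 \<le> a * b + x * max a b"
proof (cases "b \<le> a")
  case True
  then show ?thesis using fcase[of a a1 a2 b b1 b2 x x1 x2] assms by (simp add: max_def)
next
  case False
  then show ?thesis using fcase[of b b1 b2 a a1 a2 x x1 x2] assms
    by (simp add: max_def algebra_simps)
qed

end
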